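(* Let $R$ be a quotient root system with base $S$ and let $\Phi \subseteq R^+$ be co-closed. Then $\mathrm{span}_{\mathbb{Z}} \Phi = \mathrm{span}_{\mathbb{Z}} \operatorname{supp} \Phi$.
   Context: A quotient root system (QRS) $R$ is the set of non-zero images of a root system $\Delta$ (with base $\Sigma$) under the orthogonal projection of its ambient Euclidean space onto $(\mathrm{span}\,J)^\perp$ for some $J\subsetneq\Sigma$; its base $S$ consists of the images of $\Sigma\setminus J$, and every root is an integer combination of $S$ with all coefficients $\ge0$ (positive roots, $R^+$) or all $\le0$. The support of a root $\alpha$ is the set of $\theta\in S$ with non-zero coefficient in $\alpha$; $\operatorname{supp}\Phi$ is the union of the supports of the elements of $\Phi$. A subset $\Phi\subseteq R^+$ is co-closed if its complement $\Phi^c=R^+\setminus\Phi$ is closed, i.e. $\alpha,\beta\in\Phi^c$ and $\alpha+\beta\in R$ imply $\alpha+\beta\in\Phi^c$. *)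

theory Defs
  imports "HOL-Analysis.Analysis"
begin

definition refl_vec :: "'a::euclidean_space \<Rightarrow> 'a \<Rightarrow> 'a" where
  "refl_vec a b = b - (2 * (b \<bullet> a) / (a \<bullet> a)) *\<^sub>R a"

definition root_system :: "'a::euclidean_space set \<Rightarrow> bool" where
  "root_system D \<longleftrightarrow> finite D \<and> 0 \<notin> D \<and> span D = UNIV
     \<and> (\<forall>a\<in>D. \<forall>c::real. c *\<^sub>R a \<in> D \<longrightarrow> c = 1 \<or> c = -1)
     \<and> (\<forall>a\<in>D. \<forall>b\<in>D. refl_vec a b \<in> D)
     \<and> (\<forall>a\<in>D. \<forall>b\<in>D. 2 * (b \<bullet> a) / (a \<bullet> a) \<in> \<int>)"

definition nonneg_int_comb :: "'a::real_vector set \<Rightarrow> 'a \<Rightarrow> bool" where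
  "nonneg_int_comb A x \<longleftrightarrow>
     (\<exists>c::'a \<Rightarrow> int. (\<forall>t\<in>A. c t \<ge> 0) \<and> x = (\<Sum>t\<in>A. of_int (c t) *\<^sub>R t))"

definition root_base :: "'a::euclidean_space set \<Rightarrow> 'a set \<Rightarrow> bool" where
  "root_base D B \<longleftrightarrow> B \<subseteq> D \<and> independent B \<and> span B = UNIV
     \<and> (\<forall>a\<in>D. nonneg_int_comb B a \<or> nonneg_int_comb B (- a))"

definition qproj :: "'a::euclidean_space set \<Rightarrow> 'a \<Rightarrow> 'a" where
  "qproj J x = closest_point (orthogonal_comp (span J)) x"

definition qrs :: "'a::euclidean_space set \<Rightarrow> 'a set \<Rightarrow> 'a set" where
  "qrs D J = qproj J ` D - {0}"

definition qrs_base :: "'a::euclidean_space set \<Rightarrow> 'a set \<Rightarrow> 'a set" where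
  "qrs_base B J = qproj J ` (B - J)"

definition pos_roots :: "'a::real_vector set \<Rightarrow> 'a set \<Rightarrow> 'a set" where
  "pos_roots R S = {a\<in>R. nonneg_int_comb S a}"

text \<open>Support of a root: elements of S with non-zero coefficient (S is linearly
  independent, so the integer coefficients are unique).\<close>
definition root_supp :: "'a::real_vector set \<Rightarrow> 'a \<Rightarrow> 'a set" where
  "root_supp S a = {t\<in>S. \<exists>c::'a \<Rightarrow> int. a = (\<Sum>s\<in>S. of_int (c s) *\<^sub>R s) \<and> c t \<noteq> 0}"

definition set_supp :: "'a::real_vector set \<Rightarrow> 'a set \<Rightarrow> 'a set" where
  "set_supp S P = (\<Union>a\<in>P. root_supp S a)"

definition co_closed :: "'a::real_vector set \<Rightarrow> 'a set \<Rightarrow> 'a set \<Rightarrow> bool" where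
  "co_closed R S P \<longleftrightarrow> P \<subseteq> pos_roots R S \<and>
     (\<forall>a\<in>pos_roots R S - P. \<forall>b\<in>pos_roots R S - P.
        a + b \<in> R \<longrightarrow> a + b \<in> pos_roots R S - P)"

definition int_span :: "'a::real_vector set \<Rightarrow> 'a set" where
  "int_span A = {x. \<exists>F (c::'a \<Rightarrow> int). finite F \<and> F \<subseteq> A \<and> x = (\<Sum>t\<in>F. of_int (c t) *\<^sub>R t)}"

end

theory Submission
  imports Defs
begin

lemma qproj_decomp:
  fixes J :: "'a::euclidean_space set"
  assumes u: "u \<in> span J" and w: "w \<in> orthogonal_comp (span J)"
  shows "qproj J (u + w) = w"
proof -
  let ?W = "orthogonal_comp (span J)"
  have sW: "subspace ?W" by (rule subspace_orthogonal_comp)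
  have "w = closest_point ?W (u + w)"
  proof (rule closest_point_unique)
    show "convex ?W" using sW by (rule subspace_imp_convex)
    show "closed ?W" using sW by (rule closed_subspace)
    show "w \<in> ?W" by fact
    show "\<forall>z\<in>?W. dist (u + w) w \<le> dist (u + w) z"
    proof
      fix z assume z: "z \<in> ?W"
      have "w - z \<in> ?W" using sW w z by (simp add: subspace_diff)
      then have o: "u \<bullet> (w - z) = 0" using u unfolding orthogonal_comp_def orthogonal_def by auto
      have e: "u + w - z = u + (w - z)" by simp
      have n: "norm (u + (w - z)) ^ 2 = norm u ^ 2 + 2 * (u \<bullet> (w - z)) + norm (w - z) ^ 2"
        using dot_norm[of u "w - z"] by simp
      then have "norm u ^ 2 \<le> norm (u + (w - z)) ^ 2" using o by simp
      then have "norm u \<le> norm (u + (w - z))" by (rule power2_le_imp_le) simp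
      then show "dist (u + w) w \<le> dist (u + w) z" unfolding dist_norm e by simp
    qed
  qed
  then show ?thesis unfolding qproj_def by simp
qed

lemma qproj_split:
  fixes J :: "'a::euclidean_space set"
  obtains u where "u \<in> span J" "x = u + qproj J x" "qproj J x \<in> orthogonal_comp (span J)"
proof -
  obtain u w where "u \<in> span J" "w \<in> orthogonal_comp (span J)" "x = u + w"
    using subspace_sum_orthogonal_comp[OF subspace_span[of J]] set_plus_elim
    by (metis UNIV_I)
  then show ?thesis using qproj_decomp that by metis
qed

lemma linear_qproj: "linear (qproj (J::'a::euclidean_space set))"
proof (rule linearI)
  have sW: "subspace (orthogonal_comp (span J))" by (rule subspace_orthogonal_comp)
  fix x y :: 'a and c :: real
  obtain u where u: "u \<in> span J" "x = u + qproj J x" "qproj J x \<in> orthogonal_comp (span J)"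
    by (rule qproj_split)
  obtain v where v: "v \<in> span J" "y = v + qproj J y" "qproj J y \<in> orthogonal_comp (span J)"
    by (rule qproj_split)
  have "x + y = (u + v) + (qproj J x + qproj J y)" using u v by (simp add: algebra_simps)
  moreover have "u + v \<in> span J" using u v by (simp add: span_add)
  moreover have "qproj J x + qproj J y \<in> orthogonal_comp (span J)" using u v sW by (simp add: subspace_add)
  ultimately show "qproj J (x + y) = qproj J x + qproj J y" using qproj_decomp by metis
  have "c *\<^sub>R x = c *\<^sub>R u + c *\<^sub>R qproj J x" using u by (metis scaleR_right_distrib)
  moreover have "c *\<^sub>R u \<in> span J" using u by (simp add: span_mul)
  moreover have "c *\<^sub>R qproj J x \<in> orthogonal_comp (span J)" using u sW by (simp add: subspace_mul)
  ultimately show "qproj J (c *\<^sub>R x) = c *\<^sub>R qproj J x" using qproj_decomp by metis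
qed

lemma qproj_zero_iff: "qproj J x = 0 \<longleftrightarrow> x \<in> span (J::'a::euclidean_space set)"
proof
  assume "qproj J x = 0" then show "x \<in> span J" using qproj_split[of J x] by (metis add.right_neutral)
next
  assume "x \<in> span J" then show "qproj J x = 0"
  proof -
    have "0 \<in> orthogonal_comp (span J)" by (simp add: orthogonal_comp_def orthogonal_def)
    then show ?thesis using qproj_decomp[of x J 0] \<open>x \<in> span J\<close> by simp
  qed
qed

lemma rs_finite: "root_system D \<Longrightarrow> finite D" by (simp add: root_system_def)
lemma rs_nz: "root_system D \<Longrightarrow> a \<in> D \<Longrightarrow> a \<noteq> 0" by (auto simp: root_system_def)

lemma rs_neg:
  assumes "root_system D" "a \<in> D" shows "- a \<in> D"
proof -
  have "a \<bullet> a \<noteq> 0" using rs_nz[OF assms] by simp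
  then have "refl_vec a a = - a" unfolding refl_vec_def by (simp add: algebra_simps scaleR_2)
  moreover have "refl_vec a a \<in> D" using assms by (simp add: root_system_def)
  ultimately show ?thesis by simp
qed

lemma rs_diff:
  fixes a b :: "'a::euclidean_space"
  assumes rs: "root_system D" and a: "a \<in> D" and b: "b \<in> D" and p: "a \<bullet> b > 0" and ne: "a \<noteq> b"
  shows "a - b \<in> D"
proof -
  define p where "p = a \<bullet> b"
  define A where "A = a \<bullet> a"
  define Bn where "Bn = b \<bullet> b"
  have A: "A > 0" using rs_nz[OF rs a] by (simp add: A_def)
  have Bn: "Bn > 0" using rs_nz[OF rs b] by (simp add: Bn_def)
  have pp: "p > 0" using p by (simp add: p_def)
  have "2 * (a \<bullet> b) / (b \<bullet> b) \<in> \<int>" using rs a b unfolding root_system_def by blast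
  then obtain k1 where k1: "2 * p / Bn = of_int k1" by (auto simp: p_def Bn_def elim: Ints_cases)
  have "2 * (b \<bullet> a) / (a \<bullet> a) \<in> \<int>" using rs a b unfolding root_system_def by blast
  then obtain k2 where k2: "2 * p / A = of_int k2" by (auto simp: p_def A_def inner_commute elim: Ints_cases)
  have k1p: "k1 > 0"
  proof -
    have "2 * p / Bn > 0" using pp Bn by simp
    then show ?thesis using k1 by simp
  qed
  have k2p: "k2 > 0"
  proof -
    have "2 * p / A > 0" using pp A by simp
    then show ?thesis using k2 by simp
  qed
  have cs: "p\<^sup>2 \<le> A * Bn"
  proof -
    have "p \<le> norm a * norm b" unfolding p_def by (rule norm_cauchy_schwarz)
    then have "p\<^sup>2 \<le> (norm a * norm b)\<^sup>2" using pp by (simp add: power_mono)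
    also have "\<dots> = A * Bn" by (simp add: A_def Bn_def power_mult_distrib power2_norm_eq_inner)
    finally show ?thesis .
  qed
  have prod: "real_of_int (k1 * k2) * (A * Bn) = 4 * p\<^sup>2"
  proof -
    have "real_of_int (k1 * k2) = (2 * p / Bn) * (2 * p / A)" using k1 k2 by simp
    then show ?thesis using A Bn by (simp add: field_simps power2_eq_square)
  qed
  have le4: "k1 * k2 \<le> 4"
  proof -
    have "real_of_int (k1 * k2) * (A * Bn) \<le> 4 * (A * Bn)" using prod cs by simp
    then have "real_of_int (k1 * k2) \<le> 4" using A Bn by (simp add: mult_le_cancel_right)
    then show ?thesis by linarith
  qed
  consider "k1 = 1" | "k2 = 1" | "k1 \<ge> 2" "k2 \<ge> 2" using k1p k2p by linarith
  then show ?thesis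
  proof cases
    case 1
    have "refl_vec b a \<in> D" using rs a b by (simp add: root_system_def)
    moreover have "refl_vec b a = a - b" unfolding refl_vec_def using k1 1 p
      by (simp add: p_def Bn_def inner_commute)
    ultimately show ?thesis by simp
  next
    case 2
    have "refl_vec a b \<in> D" using rs a b by (simp add: root_system_def)
    moreover have "refl_vec a b = b - a" unfolding refl_vec_def using k2 2 p
      by (simp add: p_def A_def inner_commute)
    ultimately have "b - a \<in> D" by simp
    from rs_neg[OF rs this] show ?thesis by simp
  next
    case 3
    have "k1 * k2 \<ge> 2 * 2" using 3 by (intro mult_mono) auto
    then have "k1 * k2 = 4" using le4 by simp
    then have eq: "p\<^sup>2 = A * Bn" using prod by simp
    define c where "c = p / Bn"
    have "(a - c *\<^sub>R b) \<bullet> (a - c *\<^sub>R b) = A - 2 * c * p + c * c * Bn"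
      by (simp add: A_def Bn_def p_def inner_diff_left inner_diff_right inner_commute algebra_simps)
    also have "\<dots> = 0" using Bn eq unfolding c_def by (simp add: field_simps power2_eq_square)
    finally have "a = c *\<^sub>R b" by simp
    then have "c *\<^sub>R b \<in> D" using a by simp
    then have "c = 1 \<or> c = -1" using rs b unfolding root_system_def by blast
    moreover have "c > 0" using pp Bn by (simp add: c_def)
    ultimately have "c = 1" by auto
    with \<open>a = c *\<^sub>R b\<close> ne show ?thesis by simp
  qed
qed

lemma rs_sum:
  fixes a b :: "'a::euclidean_space"
  assumes rs: "root_system D" and a: "a \<in> D" and b: "b \<in> D" and p: "a \<bullet> b < 0" and ne: "a \<noteq> - b"
  shows "a + b \<in> D"
  using rs_diff[OF rs a rs_neg[OF rs b]] p ne by simp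

lemma int_span_I:
  "finite F \<Longrightarrow> F \<subseteq> A \<Longrightarrow> x = (\<Sum>t\<in>F. of_int (c t) *\<^sub>R t) \<Longrightarrow> x \<in> int_span A"
  unfolding int_span_def by (rule CollectI, rule exI[of _ F], rule exI[of _ c]) simp

lemma int_span_base: "x \<in> A \<Longrightarrow> x \<in> int_span A"
  unfolding int_span_def by (rule CollectI, rule exI[of _ "{x}"], rule exI[of _ "\<lambda>_. 1"]) simp

lemma int_span_zero: "0 \<in> int_span A"
  unfolding int_span_def by (rule CollectI, rule exI[of _ "{}"]) simp

lemma int_span_ext:
  assumes "finite F" "F \<subseteq> G" "finite G"
  shows "(\<Sum>t\<in>F. of_int (c t) *\<^sub>R t) = (\<Sum>t\<in>G. of_int (if t \<in> F then c t else 0) *\<^sub>R (t::'a::real_vector))"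
proof -
  have "(\<Sum>t\<in>G. of_int (if t \<in> F then c t else 0) *\<^sub>R t) = (\<Sum>t\<in>F. of_int (if t \<in> F then c t else 0) *\<^sub>R t)"
    using assms by (intro sum.mono_neutral_right) auto
  also have "\<dots> = (\<Sum>t\<in>F. of_int (c t) *\<^sub>R t)" by (rule sum.cong) auto
  finally show ?thesis by simp
qed

lemma int_span_add:
  assumes "x \<in> int_span A" "y \<in> int_span A" shows "x + y \<in> int_span A"
proof -
  obtain F c where F: "finite F" "F \<subseteq> A" "x = (\<Sum>t\<in>F. of_int (c t) *\<^sub>R t)"
    using assms(1) unfolding int_span_def by auto
  obtain G d where G: "finite G" "G \<subseteq> A" "y = (\<Sum>t\<in>G. of_int (d t) *\<^sub>R t)"
    using assms(2) unfolding int_span_def by auto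
  have "x = (\<Sum>t\<in>F \<union> G. of_int (if t \<in> F then c t else 0) *\<^sub>R t)"
    using F G by (simp add: int_span_ext)
  moreover have "y = (\<Sum>t\<in>F \<union> G. of_int (if t \<in> G then d t else 0) *\<^sub>R t)"
    using F G by (simp add: int_span_ext)
  ultimately have "x + y = (\<Sum>t\<in>F \<union> G. of_int ((if t \<in> F then c t else 0) + (if t \<in> G then d t else 0)) *\<^sub>R t)"
    by (simp add: sum.distrib scaleR_add_left)
  then show ?thesis using F G by (intro int_span_I[of "F \<union> G" _ _ "\<lambda>t. (if t \<in> F then c t else 0) + (if t \<in> G then d t else 0)"]) auto
qed

lemma int_span_smult:
  assumes "x \<in> int_span A" shows "of_int k *\<^sub>R x \<in> int_span A"
proof -
  obtain F c where F: "finite F" "F \<subseteq> A" "x = (\<Sum>t\<in>F. of_int (c t) *\<^sub>R t)"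
    using assms(1) unfolding int_span_def by auto
  have "of_int k *\<^sub>R x = (\<Sum>t\<in>F. of_int (k * c t) *\<^sub>R t)"
    using F by (simp add: scaleR_sum_right)
  then show ?thesis using F by (intro int_span_I[of F _ _ "\<lambda>t. k * c t"]) auto
qed

lemma int_span_diff:
  assumes "x \<in> int_span A" "y \<in> int_span A" shows "x - y \<in> int_span A"
  using int_span_add[OF assms(1) int_span_smult[OF assms(2), of "-1"]] by simp

lemma int_span_sum:
  assumes "finite F" "\<And>t. t \<in> F \<Longrightarrow> t \<in> int_span A"
  shows "(\<Sum>t\<in>F. of_int (c t) *\<^sub>R t) \<in> int_span A"
  using assms
proof (induction F rule: finite_induct)
  case empty then show ?case by (simp add: int_span_zero)
next
  case (insert x F) then show ?case by (simp add: int_span_add int_span_smult)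
qed

lemma int_span_closure:
  assumes "A \<subseteq> int_span B" shows "int_span A \<subseteq> int_span B"
proof
  fix x assume "x \<in> int_span A"
  then obtain F c where F: "finite F" "F \<subseteq> A" "x = (\<Sum>t\<in>F. of_int (c t) *\<^sub>R t)"
    unfolding int_span_def by auto
  then show "x \<in> int_span B" using assms int_span_sum[of F B c] by auto
qed

locale qctx =
  fixes D B J :: "'a::euclidean_space set"
  assumes rs: "root_system D" and rb: "root_base D B" and JB: "J \<subseteq> B"
begin

definition pos :: "'a set" where "pos = {x \<in> D. nonneg_int_comb B x}"

lemma BD: "B \<subseteq> D" using rb by (simp add: root_base_def)
lemma finB: "finite B" using BD rs_finite[OF rs] finite_subset by blast
lemma indB: "independent B" using rb by (simp add: root_base_def)
lemma finJ: "finite J" using JB finB finite_subset by blast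

lemma coef_zero:
  assumes "(\<Sum>b\<in>B. f b *\<^sub>R b) = 0" "b \<in> B" shows "f b = 0"
  using indB assms finB unfolding independent_explicit by blast

lemma coef_uniq:
  assumes "(\<Sum>b\<in>B. f b *\<^sub>R b) = (\<Sum>b\<in>B. g b *\<^sub>R b)" "b \<in> B" shows "f b = g b"
proof -
  have "(\<Sum>b\<in>B. (f b - g b) *\<^sub>R b) = 0"
    using assms(1) by (simp add: scaleR_diff_left sum_subtractf)
  then show ?thesis using coef_zero[of "\<lambda>b. f b - g b"] assms(2) by simp
qed

lemma basis_rep: "b \<in> B \<Longrightarrow> b = (\<Sum>x\<in>B. (if x = b then 1 else 0) *\<^sub>R x)"
  using finB by (simp add: if_distrib[of "\<lambda>r. r *\<^sub>R _"] cong: if_cong)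

lemma B_pos: assumes b: "b \<in> B" shows "b \<in> pos"
proof -
  have e: "(\<lambda>t. real_of_int (if t = b then 1 else 0) *\<^sub>R t) = (\<lambda>t. (if t = b then 1 else 0) *\<^sub>R t)"
    by (rule ext) simp
  have "b = (\<Sum>t\<in>B. real_of_int (if t = b then 1 else 0) *\<^sub>R t)"
    unfolding e by (rule basis_rep[OF b])
  then have "nonneg_int_comb B b" unfolding nonneg_int_comb_def
    by (intro exI[of _ "\<lambda>t. if t = b then 1 else 0"]) auto
  then show ?thesis using b BD by (auto simp: pos_def)
qed

lemma comb_add:
  assumes "nonneg_int_comb B x" "nonneg_int_comb B y" shows "nonneg_int_comb B (x + y)"
proof -
  obtain c where c: "\<forall>t\<in>B. c t \<ge> 0" "x = (\<Sum>t\<in>B. of_int (c t) *\<^sub>R t)" using assms(1) nonneg_int_comb_def by blast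
  obtain d where d: "\<forall>t\<in>B. d t \<ge> 0" "y = (\<Sum>t\<in>B. of_int (d t) *\<^sub>R t)" using assms(2) nonneg_int_comb_def by blast
  have "x + y = (\<Sum>t\<in>B. of_int (c t + d t) *\<^sub>R t)" using c d by (simp add: sum.distrib scaleR_add_left)
  then show ?thesis unfolding nonneg_int_comb_def using c d by (intro exI[of _ "\<lambda>t. c t + d t"]) auto
qed

lemma comb_sum_zero:
  assumes "nonneg_int_comb B x" "nonneg_int_comb B y" "x + y = 0" shows "x = 0"
proof -
  obtain c where c: "\<forall>t\<in>B. c t \<ge> 0" "x = (\<Sum>t\<in>B. of_int (c t) *\<^sub>R t)" using assms(1) nonneg_int_comb_def by blast
  obtain d where d: "\<forall>t\<in>B. d t \<ge> 0" "y = (\<Sum>t\<in>B. of_int (d t) *\<^sub>R t)" using assms(2) nonneg_int_comb_def by blast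
  have "(\<Sum>t\<in>B. real_of_int (c t + d t) *\<^sub>R t) = 0" using c d assms(3) by (simp add: sum.distrib scaleR_add_left)
  then have "\<forall>t\<in>B. c t = 0" using c d coef_zero[of "\<lambda>t. real_of_int (c t + d t)"]
    by (metis add_nonneg_eq_0_iff of_int_eq_0_iff)
  then show ?thesis using c by simp
qed

lemma pos_add_nz: "x \<in> pos \<Longrightarrow> y \<in> pos \<Longrightarrow> x + y \<noteq> 0"
  using comb_sum_zero rs_nz[OF rs] unfolding pos_def by blast

abbreviation "\<pi> \<equiv> qproj J"

lemma pi_J: "j \<in> J \<Longrightarrow> \<pi> j = 0" by (simp add: qproj_zero_iff span_base)

lemma pi_sum: "\<pi> (\<Sum>b\<in>B. f b *\<^sub>R b) = (\<Sum>b\<in>B-J. f b *\<^sub>R \<pi> b)"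
proof -
  have "\<pi> (\<Sum>b\<in>B. f b *\<^sub>R b) = (\<Sum>b\<in>B. f b *\<^sub>R \<pi> b)"
    using linear_qproj[of J] by (simp add: linear_sum linear_scale)
  also have "\<dots> = (\<Sum>b\<in>B-J. f b *\<^sub>R \<pi> b)"
    using finB pi_J by (intro sum.mono_neutral_right) auto
  finally show ?thesis .
qed

lemma pi_indep:
  assumes "(\<Sum>b\<in>B-J. f b *\<^sub>R \<pi> b) = 0" "b \<in> B - J" shows "f b = 0"
proof -
  let ?v = "\<Sum>b\<in>B-J. f b *\<^sub>R b"
  have "\<pi> ?v = (\<Sum>b\<in>B-J. f b *\<^sub>R \<pi> b)"
    using linear_qproj[of J] by (simp add: linear_sum linear_scale)
  then have "?v \<in> span J" using assms(1) qproj_zero_iff by metis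
  then obtain h where h: "?v = (\<Sum>j\<in>J. h j *\<^sub>R j)" using span_finite[OF finJ] by auto
  define k where "k x = (if x \<in> J then - h x else f x)" for x
  have "(\<Sum>x\<in>B. k x *\<^sub>R x) = (\<Sum>x\<in>B-J. k x *\<^sub>R x) + (\<Sum>x\<in>J. k x *\<^sub>R x)"
    using finB JB by (metis sum.subset_diff)
  also have "\<dots> = ?v - (\<Sum>j\<in>J. h j *\<^sub>R j)" by (simp add: k_def sum_negf)
  also have "\<dots> = 0" using h by simp
  finally have "k b = 0" using coef_zero assms(2) by blast
  then show ?thesis using assms(2) by (simp add: k_def)
qed

lemma pi_uniq:
  assumes "(\<Sum>b\<in>B-J. f b *\<^sub>R \<pi> b) = (\<Sum>b\<in>B-J. g b *\<^sub>R \<pi> b)" "b \<in> B - J" shows "f b = g b"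
proof -
  have "(\<Sum>b\<in>B-J. (f b - g b) *\<^sub>R \<pi> b) = 0"
    using assms(1) by (simp add: scaleR_diff_left sum_subtractf)
  then show ?thesis using pi_indep[of "\<lambda>b. f b - g b"] assms(2) by simp
qed

lemma pi_inj: "inj_on \<pi> (B - J)"
proof (rule inj_onI)
  fix x y assume x: "x \<in> B - J" and y: "y \<in> B - J" and e: "\<pi> x = \<pi> y"
  have r: "\<pi> z = (\<Sum>b\<in>B-J. (if b = z then 1 else 0) *\<^sub>R \<pi> b)" if "z \<in> B - J" for z
    using that finB by (simp add: if_distrib[of "\<lambda>r. r *\<^sub>R _"] cong: if_cong)
  have "(if x = x then 1 else 0) = (if x = y then 1 else (0::real))"
    using pi_uniq[of "\<lambda>b. if b = x then 1 else 0" "\<lambda>b. if b = y then 1 else 0" x] r[OF x] r[OF y] e x by simp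
  then show "x = y" by (cases "x = y") auto
qed

lemma sum_S:
  "(\<Sum>s\<in>qrs_base B J. g s *\<^sub>R s) = (\<Sum>b\<in>B-J. g (\<pi> b) *\<^sub>R \<pi> b)"
  unfolding qrs_base_def using sum.reindex[OF pi_inj, of "\<lambda>s. g s *\<^sub>R s"] by simp

end

context qctx begin

lemma pos_D: "x \<in> pos \<Longrightarrow> x \<in> D" by (simp add: pos_def)
lemma pos_comb: "x \<in> pos \<Longrightarrow> nonneg_int_comb B x" by (simp add: pos_def)

lemma pi_add: "\<pi> (x + y) = \<pi> x + \<pi> y"
  using linear_qproj[of J] by (simp add: linear_add)

lemma triple:
  assumes x: "x \<in> D" and th: "\<theta> \<in> B" and p: "x \<bullet> \<theta> > 0" and ne: "x \<noteq> \<theta>"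
    and g: "\<gamma> \<in> pos" and d: "\<delta> \<in> pos" and e: "x = \<gamma> + \<delta> + \<theta>"
  shows "\<gamma> + \<theta> \<in> D \<or> \<delta> + \<theta> \<in> D"
proof (rule ccontr)
  assume nn: "\<not> (\<gamma> + \<theta> \<in> D \<or> \<delta> + \<theta> \<in> D)"
  have thp: "\<theta> \<in> pos" using B_pos th by blast
  have thD: "\<theta> \<in> D" using th BD by blast
  have gD: "\<gamma> \<in> D" and dD: "\<delta> \<in> D" using g d pos_D by auto
  have h1: "\<gamma> \<bullet> \<theta> \<ge> 0"
  proof (rule ccontr)
    assume "\<not> ?thesis"
    moreover have "\<gamma> \<noteq> - \<theta>" using pos_add_nz[OF g thp] by (auto simp: eq_neg_iff_add_eq_0)
    ultimately have "\<gamma> + \<theta> \<in> D" using rs_sum[OF rs gD thD] by simp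
    with nn show False by simp
  qed
  have h2: "\<delta> \<bullet> \<theta> \<ge> 0"
  proof (rule ccontr)
    assume "\<not> ?thesis"
    moreover have "\<delta> \<noteq> - \<theta>" using pos_add_nz[OF d thp] by (auto simp: eq_neg_iff_add_eq_0)
    ultimately have "\<delta> + \<theta> \<in> D" using rs_sum[OF rs dD thD] by simp
    with nn show False by simp
  qed
  have h3: "x \<bullet> \<gamma> \<le> 0"
  proof (rule ccontr)
    assume "\<not> ?thesis"
    moreover have "x \<noteq> \<gamma>"
    proof
      assume "x = \<gamma>" then have "\<delta> + \<theta> = 0" using e by (simp add: algebra_simps)
      then show False using pos_add_nz[OF d thp] by simp
    qed
    ultimately have "x - \<gamma> \<in> D" using rs_diff[OF rs x gD] by simp
    moreover have "x - \<gamma> = \<delta> + \<theta>" using e by (simp add: algebra_simps)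
    ultimately show False using nn by simp
  qed
  have h4: "x \<bullet> \<delta> \<le> 0"
  proof (rule ccontr)
    assume "\<not> ?thesis"
    moreover have "x \<noteq> \<delta>"
    proof
      assume "x = \<delta>" then have "\<gamma> + \<theta> = 0" using e by (simp add: algebra_simps)
      then show False using pos_add_nz[OF g thp] by simp
    qed
    ultimately have "x - \<delta> \<in> D" using rs_diff[OF rs x dD] by simp
    moreover have "x - \<delta> = \<gamma> + \<theta>" using e by (simp add: algebra_simps)
    ultimately show False using nn by simp
  qed
  define a where "a = x \<bullet> x"
  define q where "q = x \<bullet> \<theta>"
  define t where "t = \<theta> \<bullet> \<theta>"
  have ta: "a \<le> q"
  proof -
    have "a = x \<bullet> \<gamma> + x \<bullet> \<delta> + x \<bullet> \<theta>" unfolding a_def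
      by (subst (2) e) (simp add: inner_add_right)
    then show ?thesis using h3 h4 by (simp add: q_def)
  qed
  have tq: "t \<le> q"
  proof -
    have "q = \<gamma> \<bullet> \<theta> + \<delta> \<bullet> \<theta> + t" unfolding q_def t_def
      by (subst e) (simp add: inner_add_left)
    then show ?thesis using h1 h2 by simp
  qed
  have cs: "q\<^sup>2 \<le> a * t" unfolding q_def a_def t_def by (rule Cauchy_Schwarz_ineq)
  have qp: "q > 0" using p q_def by simp
  have tp: "t > 0" using thD rs_nz[OF rs] t_def by auto
  have "q * q \<le> q * t" using cs ta tp by (simp add: power2_eq_square) (metis mult_right_mono order_trans less_imp_le)
  then have "q \<le> t" using qp by simp
  then have qt: "q = t" using tq by simp
  have "t * t \<le> a * t" using cs qt by (simp add: power2_eq_square)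
  then have "t \<le> a" using tp by simp
  then have at: "a = t" using ta qt by simp
  have "(x - \<theta>) \<bullet> (x - \<theta>) = a - 2 * q + t"
    by (simp add: a_def q_def t_def inner_diff_left inner_diff_right inner_commute)
  also have "\<dots> = 0" using at qt by simp
  finally have "x = \<theta>" by simp
  with ne show False by simp
qed

end

context qctx begin

definition NS :: "'a set \<Rightarrow> 'a \<Rightarrow> bool" where
  "NS L x \<longleftrightarrow> (\<forall>\<gamma> \<delta>. \<gamma> \<in> pos \<longrightarrow> \<delta> \<in> pos \<longrightarrow> x = \<gamma> + \<delta> \<longrightarrow> \<pi> \<gamma> \<in> L)"

lemma NS_D: "NS L x \<Longrightarrow> \<gamma> \<in> pos \<Longrightarrow> \<delta> \<in> pos \<Longrightarrow> x = \<gamma> + \<delta> \<Longrightarrow> \<pi> \<gamma> \<in> L"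
  unfolding NS_def by blast

lemma exists_pos_inner:
  assumes x: "x \<in> D" and f: "\<forall>b\<in>B. f b \<ge> 0" and xe: "x = (\<Sum>b\<in>B. of_int (f b) *\<^sub>R b)"
  shows "\<exists>\<theta>\<in>B. f \<theta> > 0 \<and> x \<bullet> \<theta> > 0"
proof (rule ccontr)
  assume nt: "\<not> (\<exists>\<theta>\<in>B. f \<theta> > 0 \<and> x \<bullet> \<theta> > 0)"
  have h: "\<forall>b\<in>B. of_int (f b) * (x \<bullet> b) \<le> 0"
  proof
    fix b assume b: "b \<in> B"
    show "of_int (f b) * (x \<bullet> b) \<le> 0"
    proof (cases "f b = 0")
      case False
      then have "f b > 0" using f b by (simp add: order_less_le)
      then have "x \<bullet> b \<le> 0" using nt b by (meson not_less)
      then show ?thesis using \<open>f b > 0\<close> by (simp add: mult_nonneg_nonpos)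
    qed simp
  qed
  have "x \<bullet> x = (\<Sum>b\<in>B. of_int (f b) * (x \<bullet> b))"
    by (subst (2) xe) (simp add: inner_sum_right)
  also have "\<dots> \<le> 0" using h by (intro sum_nonpos) auto
  finally have "x \<bullet> x \<le> 0" .
  then have "x = 0" by (metis inner_gt_zero_iff not_less)
  then show False using rs_nz[OF rs x] by simp
qed

lemma lift_main:
  assumes Ldiff: "\<And>u v. u \<in> L \<Longrightarrow> v \<in> L \<Longrightarrow> u - v \<in> L"
  shows "x \<in> D \<Longrightarrow> (\<forall>b\<in>B. f b \<ge> 0) \<Longrightarrow> x = (\<Sum>b\<in>B. of_int (f b) *\<^sub>R b) \<Longrightarrow> sum f B = int n
    \<Longrightarrow> \<pi> x \<in> L \<Longrightarrow> NS L x \<Longrightarrow> \<theta> \<in> B - J \<Longrightarrow> f \<theta> \<noteq> 0 \<Longrightarrow> \<pi> \<theta> \<in> L"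
proof (induction n arbitrary: x f \<theta> rule: less_induct)
  case (less n x f \<theta>)
  obtain \<theta>0 where t0: "\<theta>0 \<in> B" "f \<theta>0 > 0" "x \<bullet> \<theta>0 > 0"
    using exists_pos_inner[OF less.prems(1,2,3)] by blast
  have t0D: "\<theta>0 \<in> D" using t0 BD by blast
  have t0p: "\<theta>0 \<in> pos" using t0 B_pos by blast
  have r0: "\<theta>0 = (\<Sum>b\<in>B. (if b = \<theta>0 then 1 else 0) *\<^sub>R b)" using basis_rep[OF t0(1)] .
  show ?case
  proof (cases "x = \<theta>0")
    case True
    have "(\<Sum>b\<in>B. real_of_int (f b) *\<^sub>R b) = x" using less.prems(3) by simp
    also have "\<dots> = \<theta>0" using True .
    also note r0
    finally have "real_of_int (f \<theta>) = (if \<theta> = \<theta>0 then 1 else 0)"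
      using less.prems(7) by (intro coef_uniq) auto
    then have "\<theta> = \<theta>0" using less.prems(8) by (cases "\<theta> = \<theta>0") auto
    then show ?thesis using True less.prems(5) by simp
  next
    case False
    define \<beta> where "\<beta> = x - \<theta>0"
    have bD: "\<beta> \<in> D" unfolding \<beta>_def using rs_diff[OF rs less.prems(1) t0D t0(3) False] .
    have "nonneg_int_comb B \<beta>"
    proof (rule ccontr)
      assume nb: "\<not> nonneg_int_comb B \<beta>"
      then have "nonneg_int_comb B (- \<beta>)" using rb bD unfolding root_base_def by blast
      then obtain d where d: "\<forall>t\<in>B. d t \<ge> 0" "- \<beta> = (\<Sum>t\<in>B. of_int (d t) *\<^sub>R t)"
        unfolding nonneg_int_comb_def by blast
      have "x = \<theta>0 - (- \<beta>)" unfolding \<beta>_def by simp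
      also have "\<dots> = (\<Sum>b\<in>B. ((if b = \<theta>0 then 1 else 0) - of_int (d b)) *\<^sub>R b)"
        by (subst r0, subst d(2)) (simp add: scaleR_diff_left sum_subtractf)
      finally have xe: "x = (\<Sum>b\<in>B. ((if b = \<theta>0 then 1 else 0) - of_int (d b)) *\<^sub>R b)" .
      have fz: "f b = 0" if "b \<in> B" "b \<noteq> \<theta>0" for b
      proof -
        have "real_of_int (f b) = (if b = \<theta>0 then 1 else 0) - of_int (d b)"
          using coef_uniq[OF trans[OF less.prems(3)[symmetric] xe] that(1)] .
        then have "f b = - d b" using that(2) by simp
        then show ?thesis using less.prems(2) d(1) that(1) by force
      qed
      have "x = (\<Sum>b\<in>B. (if b = \<theta>0 then of_int (f \<theta>0) else 0) *\<^sub>R b)"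
        unfolding less.prems(3) by (rule sum.cong) (use fz in auto)
      also have "\<dots> = of_int (f \<theta>0) *\<^sub>R \<theta>0"
        using finB t0(1) by (simp add: if_distrib[of "\<lambda>r. r *\<^sub>R _"] cong: if_cong)
      finally have xf: "x = of_int (f \<theta>0) *\<^sub>R \<theta>0" .
      have red: "\<forall>a\<in>D. \<forall>c::real. c *\<^sub>R a \<in> D \<longrightarrow> c = 1 \<or> c = -1"
        using rs by (simp add: root_system_def)
      have "real_of_int (f \<theta>0) = 1 \<or> real_of_int (f \<theta>0) = -1"
        using red t0D less.prems(1) xf by metis
      then have "f \<theta>0 = 1" using t0(2) by auto
      then have "x = \<theta>0" using xf by simp
      with False show False by simp
    qed
    then obtain g where g: "\<forall>t\<in>B. g t \<ge> 0" "\<beta> = (\<Sum>t\<in>B. of_int (g t) *\<^sub>R t)"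
      unfolding nonneg_int_comb_def by blast
    have bp: "\<beta> \<in> pos" using bD \<open>nonneg_int_comb B \<beta>\<close> by (simp add: pos_def)
    have xe: "x = (\<Sum>b\<in>B. (of_int (g b) + (if b = \<theta>0 then 1 else 0)) *\<^sub>R b)"
    proof -
      have "x = \<beta> + \<theta>0" unfolding \<beta>_def by simp
      also have "\<dots> = (\<Sum>b\<in>B. of_int (g b) *\<^sub>R b) + (\<Sum>b\<in>B. (if b = \<theta>0 then 1 else 0) *\<^sub>R b)"
        by (rule arg_cong2[where f="(+)"], rule g(2), rule r0)
      also have "\<dots> = (\<Sum>b\<in>B. (of_int (g b) + (if b = \<theta>0 then 1 else 0)) *\<^sub>R b)"
        by (simp add: scaleR_add_left sum.distrib)
      finally show ?thesis .
    qed
    have fg: "f b = g b + (if b = \<theta>0 then 1 else 0)" if "b \<in> B" for b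
    proof -
      have "real_of_int (f b) = of_int (g b) + (if b = \<theta>0 then 1 else 0)"
        using coef_uniq[OF trans[OF less.prems(3)[symmetric] xe] that] .
      then show ?thesis by (cases "b = \<theta>0") simp_all
    qed
    have "sum f B = sum g B + 1"
    proof -
      have "sum f B = (\<Sum>b\<in>B. g b + (if b = \<theta>0 then 1 else 0))" using fg by (rule sum.cong[OF refl])
      also have "\<dots> = sum g B + 1" using finB t0(1) by (simp add: sum.distrib)
      finally show ?thesis .
    qed
    moreover have sg0: "sum g B \<ge> 0" using g(1) by (intro sum_nonneg) auto
    ultimately have n1: "n \<ge> 1" using less.prems(4) by linarith
    have sg: "sum g B = int (n - 1)" using n1 less.prems(4) \<open>sum f B = sum g B + 1\<close> by (simp add: of_nat_diff)
    have nlt: "n - 1 < n" using n1 by simp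
    have xb: "x = \<beta> + \<theta>0" unfolding \<beta>_def by simp
    have pib: "\<pi> \<beta> \<in> L" using NS_D[OF less.prems(6) bp t0p xb] .
    have pit: "\<pi> \<theta>0 \<in> L" using NS_D[OF less.prems(6) t0p bp] xb by (simp add: add.commute)
    show ?thesis
    proof (cases "NS L \<beta>")
      case True
      show ?thesis
      proof (cases "\<theta> = \<theta>0")
        case True then show ?thesis using pit by simp
      next
        case False
        have "g \<theta> \<noteq> 0" using fg[of \<theta>] False less.prems(7,8) by auto
        then show ?thesis using less.IH[OF nlt bD g(1) g(2) sg pib \<open>NS L \<beta>\<close> less.prems(7)] by simp
      qed
    next
      case nsb: False
      then obtain \<gamma> \<delta> where gd: "\<gamma> \<in> pos" "\<delta> \<in> pos" "\<beta> = \<gamma> + \<delta>" "\<pi> \<gamma> \<notin> L"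
        unfolding NS_def by blast
      have xgd: "x = \<gamma> + \<delta> + \<theta>0" using xb gd(3) by simp
      have tr: "\<gamma> + \<theta>0 \<in> D \<or> \<delta> + \<theta>0 \<in> D"
        using triple[OF less.prems(1) t0(1) t0(3) False gd(1) gd(2) xgd] .
      then show ?thesis
      proof
        assume a: "\<gamma> + \<theta>0 \<in> D"
        have "\<gamma> + \<theta>0 \<in> pos" using a comb_add[OF pos_comb[OF gd(1)] pos_comb[OF t0p]] by (simp add: pos_def)
        moreover have "x = \<delta> + (\<gamma> + \<theta>0)" using xgd by (simp add: algebra_simps)
        ultimately have "\<pi> \<delta> \<in> L" using NS_D[OF less.prems(6) gd(2)] by blast
        then have "\<pi> \<beta> - \<pi> \<delta> \<in> L" using Ldiff pib by blast
        moreover have "\<pi> \<beta> - \<pi> \<delta> = \<pi> \<gamma>" using gd(3) pi_add by simp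
        ultimately show ?thesis using gd(4) by simp
      next
        assume a: "\<delta> + \<theta>0 \<in> D"
        have "\<delta> + \<theta>0 \<in> pos" using a comb_add[OF pos_comb[OF gd(2)] pos_comb[OF t0p]] by (simp add: pos_def)
        moreover have "x = \<gamma> + (\<delta> + \<theta>0)" using xgd by (simp add: algebra_simps)
        ultimately have "\<pi> \<gamma> \<in> L" using NS_D[OF less.prems(6) gd(1)] by blast
        then show ?thesis using gd(4) by simp
      qed
    qed
  qed
qed

end

context qctx begin

abbreviation "S \<equiv> qrs_base B J"
abbreviation "R \<equiv> qrs D J"

lemma finS: "finite S" unfolding qrs_base_def using finB by simp

lemma pi_comb:
  assumes "x = (\<Sum>b\<in>B. of_int (c b) *\<^sub>R b)"
  shows "\<pi> x = (\<Sum>s\<in>S. of_int (c (inv_into (B - J) \<pi> s)) *\<^sub>R s)"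
proof -
  have "\<pi> x = (\<Sum>b\<in>B-J. of_int (c b) *\<^sub>R \<pi> b)" using assms pi_sum by simp
  also have "\<dots> = (\<Sum>b\<in>B-J. of_int (c (inv_into (B - J) \<pi> (\<pi> b))) *\<^sub>R \<pi> b)"
    by (rule sum.cong) (simp_all add: inv_into_f_f[OF pi_inj])
  also have "\<dots> = (\<Sum>s\<in>S. of_int (c (inv_into (B - J) \<pi> s)) *\<^sub>R s)"
    using sum_S[of "\<lambda>s. of_int (c (inv_into (B - J) \<pi> s))"] by simp
  finally show ?thesis .
qed

lemma pi_pos:
  assumes "\<gamma> \<in> pos" shows "\<pi> \<gamma> = 0 \<or> \<pi> \<gamma> \<in> pos_roots R S"
proof (cases "\<pi> \<gamma> = 0")
  case False
  obtain c where c: "\<forall>t\<in>B. c t \<ge> 0" "\<gamma> = (\<Sum>t\<in>B. of_int (c t) *\<^sub>R t)"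
    using assms unfolding pos_def nonneg_int_comb_def by blast
  have "nonneg_int_comb S (\<pi> \<gamma>)" unfolding nonneg_int_comb_def
  proof (intro exI[of _ "\<lambda>s. c (inv_into (B - J) \<pi> s)"] conjI ballI)
    fix s assume "s \<in> S"
    then have "inv_into (B - J) \<pi> s \<in> B - J" unfolding qrs_base_def by (rule inv_into_into)
    then show "c (inv_into (B - J) \<pi> s) \<ge> 0" using c(1) by blast
  qed (rule pi_comb[OF c(2)])
  moreover have "\<pi> \<gamma> \<in> R" unfolding qrs_def using False assms pos_D by blast
  ultimately show ?thesis by (simp add: pos_roots_def)
qed simp

lemma lift_pos:
  assumes a: "\<alpha> \<in> pos_roots R S" and ax: "\<alpha> = \<pi> x" and x: "x \<in> D"
  shows "x \<in> pos"
proof (rule ccontr)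
  assume nx: "x \<notin> pos"
  then have "\<not> nonneg_int_comb B x" using x by (simp add: pos_def)
  then have "nonneg_int_comb B (- x)" using rb x unfolding root_base_def by blast
  then obtain d where d: "\<forall>t\<in>B. d t \<ge> 0" "- x = (\<Sum>t\<in>B. of_int (d t) *\<^sub>R t)"
    unfolding nonneg_int_comb_def by blast
  obtain c where c: "\<forall>t\<in>S. c t \<ge> 0" "\<alpha> = (\<Sum>t\<in>S. of_int (c t) *\<^sub>R t)"
    using a unfolding pos_roots_def nonneg_int_comb_def by blast
  have a0: "\<alpha> \<noteq> 0" using a by (simp add: pos_roots_def qrs_def)
  have e1: "\<alpha> = (\<Sum>b\<in>B-J. of_int (c (\<pi> b)) *\<^sub>R \<pi> b)" using c(2) sum_S[of "\<lambda>s. of_int (c s)"] by simp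
  have "\<pi> (- x) = - \<alpha>" using ax linear_qproj[of J] by (simp add: linear_neg)
  then have "- \<alpha> = (\<Sum>b\<in>B-J. of_int (d b) *\<^sub>R \<pi> b)" using d(2) pi_sum by simp
  then have "\<alpha> = - (\<Sum>b\<in>B-J. of_int (d b) *\<^sub>R \<pi> b)" by (metis minus_minus)
  also have "\<dots> = (\<Sum>b\<in>B-J. (- of_int (d b)) *\<^sub>R \<pi> b)" by (simp add: sum_negf)
  finally have e2: "\<alpha> = (\<Sum>b\<in>B-J. (- of_int (d b)) *\<^sub>R \<pi> b)" .
  have z: "c (\<pi> b) = 0" if "b \<in> B - J" for b
  proof -
    have "real_of_int (c (\<pi> b)) = - of_int (d b)" using pi_uniq[OF trans[OF e1[symmetric] e2] that] .
    moreover have "c (\<pi> b) \<ge> 0" using c(1) that unfolding qrs_base_def by blast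
    moreover have "d b \<ge> 0" using d(1) that by blast
    ultimately show ?thesis by linarith
  qed
  have "\<alpha> = 0" unfolding e1 using z by simp
  with a0 show False by simp
qed

lemma supp_lift:
  assumes ax: "\<alpha> = \<pi> x" and xe: "x = (\<Sum>b\<in>B. of_int (f b) *\<^sub>R b)" and t: "t \<in> root_supp S \<alpha>"
  shows "\<exists>\<theta>\<in>B - J. t = \<pi> \<theta> \<and> f \<theta> \<noteq> 0"
proof -
  obtain c where tS: "t \<in> S" and c: "\<alpha> = (\<Sum>s\<in>S. of_int (c s) *\<^sub>R s)" "c t \<noteq> 0"
    using t unfolding root_supp_def by blast
  obtain \<theta> where th: "\<theta> \<in> B - J" "t = \<pi> \<theta>" using tS unfolding qrs_base_def by blast
  have e1: "\<alpha> = (\<Sum>b\<in>B-J. of_int (c (\<pi> b)) *\<^sub>R \<pi> b)" using c(1) sum_S[of "\<lambda>s. of_int (c s)"] by simp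
  have e2: "\<alpha> = (\<Sum>b\<in>B-J. of_int (f b) *\<^sub>R \<pi> b)" using ax xe pi_sum by simp
  have "real_of_int (c (\<pi> \<theta>)) = of_int (f \<theta>)" using pi_uniq[OF trans[OF e1[symmetric] e2] th(1)] .
  then have "f \<theta> \<noteq> 0" using c(2) th(2) by simp
  then show ?thesis using th by blast
qed

lemma main_supp:
  assumes cc: "co_closed R S P" and aP: "\<alpha> \<in> P" and t: "t \<in> root_supp S \<alpha>"
  shows "t \<in> int_span P"
proof -
  let ?L = "int_span P"
  have apos: "\<alpha> \<in> pos_roots R S" using cc aP by (auto simp: co_closed_def)
  then have "\<alpha> \<in> R" by (simp add: pos_roots_def)
  then obtain x where x: "x \<in> D" "\<alpha> = \<pi> x" unfolding qrs_def by blast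
  have xp: "x \<in> pos" using lift_pos[OF apos x(2) x(1)] .
  then obtain f where f: "\<forall>t\<in>B. f t \<ge> 0" "x = (\<Sum>t\<in>B. of_int (f t) *\<^sub>R t)"
    unfolding pos_def nonneg_int_comb_def by blast
  have aL: "\<alpha> \<in> ?L" using aP by (rule int_span_base)
  have ns: "NS ?L x" unfolding NS_def
  proof (intro allI impI)
    fix \<gamma> \<delta> assume g: "\<gamma> \<in> pos" and d: "\<delta> \<in> pos" and e: "x = \<gamma> + \<delta>"
    have ad: "\<alpha> = \<pi> \<gamma> + \<pi> \<delta>" using x(2) e pi_add by simp
    show "\<pi> \<gamma> \<in> ?L"
    proof (cases "\<pi> \<gamma> = 0")
      case True then show ?thesis by (simp add: int_span_zero)
    next
      case g0: False
      show ?thesis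
      proof (cases "\<pi> \<delta> = 0")
        case True then show ?thesis using ad aL by simp
      next
        case d0: False
        have gp: "\<pi> \<gamma> \<in> pos_roots R S" using pi_pos[OF g] g0 by simp
        have dp: "\<pi> \<delta> \<in> pos_roots R S" using pi_pos[OF d] d0 by simp
        show ?thesis
        proof (cases "\<pi> \<gamma> \<in> P")
          case True then show ?thesis by (rule int_span_base)
        next
          case gn: False
          show ?thesis
          proof (cases "\<pi> \<delta> \<in> P")
            case True
            have "\<alpha> - \<pi> \<delta> \<in> ?L" using int_span_diff[OF aL int_span_base[OF True]] .
            then show ?thesis using ad by simp
          next
            case False
            have "\<pi> \<gamma> + \<pi> \<delta> \<in> pos_roots R S - P"
              using cc gp dp gn False \<open>\<alpha> \<in> R\<close> ad unfolding co_closed_def by blast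
            then show ?thesis using ad aP by simp
          qed
        qed
      qed
    qed
  qed
  have s0: "sum f B \<ge> 0" using f(1) by (intro sum_nonneg) auto
  obtain \<theta> where th: "\<theta> \<in> B - J" "t = \<pi> \<theta>" "f \<theta> \<noteq> 0"
    using supp_lift[OF x(2) f(2) t] by blast
  have "\<pi> \<theta> \<in> ?L"
  proof -
    have n: "sum f B = int (nat (sum f B))" using s0 by simp
    have px: "\<pi> x \<in> ?L" using aL x(2) by simp
    show ?thesis using lift_main[of ?L x f "nat (sum f B)" \<theta>, OF int_span_diff x(1) f(1) f(2) n px ns th(1) th(3)] .
  qed
  then show ?thesis using th(2) by simp
qed

end

theorem proposition2p14:
  fixes D B J P :: "'a::euclidean_space set"
  assumes "root_system D"
    and "root_base D B"
    and "J \<subset> B"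
    and "co_closed (qrs D J) (qrs_base B J) P"
  shows "int_span P = int_span (set_supp (qrs_base B J) P)"
proof -
  interpret qctx D B J using assms(1,2,3) by unfold_locales auto
  show ?thesis
  proof
    show "int_span P \<subseteq> int_span (set_supp S P)"
    proof (rule int_span_closure, rule subsetI)
      fix a assume aP: "a \<in> P"
      then have "a \<in> pos_roots R S" using assms(4) by (auto simp: co_closed_def)
      then obtain c where c: "\<forall>t\<in>S. c t \<ge> 0" "a = (\<Sum>t\<in>S. of_int (c t) *\<^sub>R t)"
        unfolding pos_roots_def nonneg_int_comb_def by blast
      let ?F = "{t \<in> S. c t \<noteq> 0}"
      have "a = (\<Sum>t\<in>?F. of_int (c t) *\<^sub>R t)"
        unfolding c(2) using finS by (intro sum.mono_neutral_right) auto
      moreover have "?F \<subseteq> set_supp S P"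
        unfolding set_supp_def root_supp_def using aP c(2) by blast
      ultimately show "a \<in> int_span (set_supp S P)"
        using finS by (intro int_span_I[of ?F _ _ c]) auto
    qed
    show "int_span (set_supp S P) \<subseteq> int_span P"
    proof (rule int_span_closure, rule subsetI)
      fix t assume "t \<in> set_supp S P"
      then obtain \<alpha> where "\<alpha> \<in> P" "t \<in> root_supp S \<alpha>" unfolding set_supp_def by blast
      then show "t \<in> int_span P" using main_supp[OF assms(4)] by blast
    qed
  qed
qed


end
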